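(* Let $n \ge 1$, let $Q \ge 0$, let $\alpha \ge 0$, and let $q_1,\dots,q_n \ge 0$ be demands. Let $d_{i,i+1}$ ($1 \le i \le n-1$), $d_{0,i}$ and $d_{i,0}$ ($1 \le i \le n$) be real numbers. For $1 \le i \le n$ put $D[i] = \sum_{k=1}^{i-1} d_{k,k+1}$ and $Q[i] = \sum_{k=1}^{i} q_k$, with $Q[0]=0$. Let $\mathcal{G}$ be the directed acyclic graph with vertex set $\{0,1,\dots,n\}$ and an arc $(i,j)$ for every $0 \le i<j \le n$, with cost $$c(i,j) = d_{0,i+1} + D[j] - D[i+1] + d_{j,0} + \alpha \max\{Q[j]-Q[i]-Q,\,0\}.$$ Then there is an algorithm that computes a minimum-cost path from $0$ to $n$ in $\mathcal{G}$ (together with its cost) in $\mathcal{O}(n)$ time.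
   Context: This is the "Split" problem with soft capacity constraints for the vehicle routing problem: customers $1,\dots,n$ are given in a fixed order (a "giant tour"), $d_{0,i}$ and $d_{i,0}$ are the distances from the depot to customer $i$ and back, $d_{i,i+1}$ is the distance between consecutive customers, and an arc $(i,j)$ represents a route leaving the depot, visiting customers $i+1,\dots,j$ in order and returning to the depot; exceeding the vehicle capacity $Q$ is allowed but penalized linearly with coefficient $\alpha$. Running time is measured in the model where arithmetic operations and comparisons on reals take constant time. *)

theory Defs
  imports Complex_Main
begin

text \<open>Arithmetic on reals (+,-,*,/) and comparisons of reals take unit
time, as do addition/subtraction/comparison of natural-number addresses and counters.
There is no floor/conversion operation, so no bit-packing tricks are possible.\<close>

record st =
  nmem :: "nat \<times> nat \<Rightarrow> nat"
  rmem :: "nat \<times> nat \<Rightarrow> real"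

datatype nexp = NC nat | NL nat nexp | NAdd nexp nexp | NSub nexp nexp

datatype rexp = RC real | RL nat nexp | RAdd rexp rexp | RSub rexp rexp
  | RMul rexp rexp | RDiv rexp rexp

datatype bexp = NLess nexp nexp | NEq nexp nexp | RLess rexp rexp | RLe rexp rexp
  | BNot bexp | BAnd bexp bexp | BOr bexp bexp

datatype com = Skip
  | NAssign nat nexp nexp
  | RAssign nat nexp rexp
  | Seq com com
  | If bexp com com
  | While bexp com

fun neval :: "nexp \<Rightarrow> st \<Rightarrow> nat" where
  "neval (NC c) s = c"
| "neval (NL k e) s = nmem s (k, neval e s)"
| "neval (NAdd a b) s = neval a s + neval b s"
| "neval (NSub a b) s = neval a s - neval b s"

fun reval :: "rexp \<Rightarrow> st \<Rightarrow> real" where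
  "reval (RC c) s = c"
| "reval (RL k e) s = rmem s (k, neval e s)"
| "reval (RAdd a b) s = reval a s + reval b s"
| "reval (RSub a b) s = reval a s - reval b s"
| "reval (RMul a b) s = reval a s * reval b s"
| "reval (RDiv a b) s = reval a s / reval b s"

fun beval :: "bexp \<Rightarrow> st \<Rightarrow> bool" where
  "beval (NLess a b) s = (neval a s < neval b s)"
| "beval (NEq a b) s = (neval a s = neval b s)"
| "beval (RLess a b) s = (reval a s < reval b s)"
| "beval (RLe a b) s = (reval a s \<le> reval b s)"
| "beval (BNot b) s = (\<not> beval b s)"
| "beval (BAnd a b) s = (beval a s \<and> beval b s)"
| "beval (BOr a b) s = (beval a s \<or> beval b s)"

inductive exec :: "com \<Rightarrow> st \<Rightarrow> nat \<Rightarrow> st \<Rightarrow> bool" where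
  Skip: "exec Skip s 1 s"
| NAssign: "exec (NAssign k e v) s 1
     (s\<lparr>nmem := (nmem s)((k, neval e s) := neval v s)\<rparr>)"
| RAssign: "exec (RAssign k e v) s 1
     (s\<lparr>rmem := (rmem s)((k, neval e s) := reval v s)\<rparr>)"
| Seq: "exec c1 s t1 s1 \<Longrightarrow> exec c2 s1 t2 s2 \<Longrightarrow> exec (Seq c1 c2) s (t1 + t2) s2"
| IfT: "beval b s \<Longrightarrow> exec c1 s t s' \<Longrightarrow> exec (If b c1 c2) s (t + 1) s'"
| IfF: "\<not> beval b s \<Longrightarrow> exec c2 s t s' \<Longrightarrow> exec (If b c1 c2) s (t + 1) s'"
| WhileF: "\<not> beval b s \<Longrightarrow> exec (While b c) s 1 s"
| WhileT: "beval b s \<Longrightarrow> exec c s t1 s1 \<Longrightarrow> exec (While b c) s1 t2 s2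
     \<Longrightarrow> exec (While b c) s (t1 + t2 + 1) s2"

text \<open>Input: n, Q, alpha, demands q i (1..n), depot distances d0 i = d_{0,i},
dback i = d_{i,0} (1..n), consecutive distances dnext i = d_{i,i+1} (1..n-1).\<close>

definition Dpre :: "(nat \<Rightarrow> real) \<Rightarrow> nat \<Rightarrow> real" where
  "Dpre dnext i = (\<Sum>k = 1..<i. dnext k)"

definition Qpre :: "(nat \<Rightarrow> real) \<Rightarrow> nat \<Rightarrow> real" where
  "Qpre q i = (\<Sum>k = 1..i. q k)"

definition arc_cost :: "real \<Rightarrow> real \<Rightarrow> (nat \<Rightarrow> real) \<Rightarrow> (nat \<Rightarrow> real) \<Rightarrow>
    (nat \<Rightarrow> real) \<Rightarrow> (nat \<Rightarrow> real) \<Rightarrow> nat \<Rightarrow> nat \<Rightarrow> real" where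
  "arc_cost Q \<alpha> q d0 dback dnext i j =
     d0 (i + 1) + Dpre dnext j - Dpre dnext (i + 1) + dback j
     + \<alpha> * max (Qpre q j - Qpre q i - Q) 0"

text \<open>A path from 0 to n in the DAG G (arcs (i,j) for 0 \<le> i < j \<le> n), as its vertex list.\<close>
definition is_path :: "nat \<Rightarrow> nat list \<Rightarrow> bool" where
  "is_path n p \<longleftrightarrow> p \<noteq> [] \<and> hd p = 0 \<and> last p = n \<and> sorted_wrt (<) p"

definition path_cost :: "(nat \<Rightarrow> nat \<Rightarrow> real) \<Rightarrow> nat list \<Rightarrow> real" where
  "path_cost c p = (\<Sum>(i, j) \<leftarrow> zip p (tl p). c i j)"

definition init_state :: "nat \<Rightarrow> real \<Rightarrow> real \<Rightarrow> (nat \<Rightarrow> real) \<Rightarrow> (nat \<Rightarrow> real) \<Rightarrow>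
    (nat \<Rightarrow> real) \<Rightarrow> (nat \<Rightarrow> real) \<Rightarrow> st" where
  "init_state n Q \<alpha> q d0 dback dnext =
     \<lparr> nmem = (\<lambda>_. 0)((0, 0) := n),
       rmem = (\<lambda>(a, i).
          if a = 0 \<and> i = 0 then Q
          else if a = 0 \<and> i = 1 then \<alpha>
          else if a = 1 \<and> 1 \<le> i \<and> i \<le> n then q i
          else if a = 2 \<and> 1 \<le> i \<and> i \<le> n then d0 i
          else if a = 3 \<and> 1 \<le> i \<and> i \<le> n then dback i
          else if a = 4 \<and> 1 \<le> i \<and> i < n then dnext i
          else 0) \<rparr>"

definition out_path :: "st \<Rightarrow> nat list" where
  "out_path s = map (\<lambda>k. nmem s (3, k)) [0..<nmem s (2, 0) + 1]"

definition out_cost :: "st \<Rightarrow> real" where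
  "out_cost s = rmem s (5, 0)"

end

theory Submission
  imports Defs
begin

definition spec :: "com \<Rightarrow> st \<Rightarrow> (nat \<Rightarrow> st \<Rightarrow> bool) \<Rightarrow> bool" where
  "spec c s R \<longleftrightarrow> (\<exists>t s'. exec c s t s' \<and> R t s')"

lemma spec_Skip: "R 1 s \<Longrightarrow> spec Skip s R"
  unfolding spec_def by (blast intro: exec.Skip)

lemma spec_NAssign: "R 1 (s\<lparr>nmem := (nmem s)((k, neval e s) := neval v s)\<rparr>) \<Longrightarrow> spec (NAssign k e v) s R"
  unfolding spec_def by (blast intro: exec.NAssign)

lemma spec_RAssign: "R 1 (s\<lparr>rmem := (rmem s)((k, neval e s) := reval v s)\<rparr>) \<Longrightarrow> spec (RAssign k e v) s R"
  unfolding spec_def by (blast intro: exec.RAssign)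

lemma spec_Seq: "spec c1 s (\<lambda>t1 s1. spec c2 s1 (\<lambda>t2 s2. R (t1 + t2) s2)) \<Longrightarrow> spec (Seq c1 c2) s R"
  unfolding spec_def by (blast intro: exec.Seq)

lemma spec_If: "(beval b s \<Longrightarrow> spec c1 s (\<lambda>t. R (t + 1))) \<Longrightarrow> (\<not> beval b s \<Longrightarrow> spec c2 s (\<lambda>t. R (t + 1)))
   \<Longrightarrow> spec (If b c1 c2) s R"
  unfolding spec_def by (cases "beval b s") (blast intro: exec.IfT exec.IfF)+

lemma spec_mono: "spec c s R \<Longrightarrow> (\<And>t s'. R t s' \<Longrightarrow> R' t s') \<Longrightarrow> spec c s R'"
  unfolding spec_def by blast

lemma spec_While:
  assumes "I s"
    and step: "\<And>s. I s \<Longrightarrow> beval b s \<Longrightarrow> spec c s (\<lambda>t s'. I s' \<and> t + pot s' < pot s)"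
  shows "spec (While b c) s (\<lambda>t s'. I s' \<and> \<not> beval b s' \<and> t + pot s' \<le> pot s + 1)"
  using assms(1)
proof (induction "pot s" arbitrary: s rule: less_induct)
  case less
  show ?case
  proof (cases "beval b s")
    case False
    then show ?thesis unfolding spec_def using less.prems exec.WhileF[OF False] by fastforce
  next
    case True
    from step[OF less.prems True] obtain t1 s1 where e1: "exec c s t1 s1" and i1: "I s1" and p1: "t1 + pot s1 < pot s"
      unfolding spec_def by blast
    from less.hyps[of s1] p1 i1 obtain t2 s2 where e2: "exec (While b c) s1 t2 s2" and
      r2: "I s2 \<and> \<not> beval b s2 \<and> t2 + pot s2 \<le> pot s1 + 1"
      unfolding spec_def by fastforce
    show ?thesis unfolding spec_def
      apply (rule exI[of _ "t1 + t2 + 1"], rule exI[of _ s2])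
      using exec.WhileT[OF True e1 e2] r2 p1 by auto
  qed
qed

function itl :: "(nat \<Rightarrow> nat) \<Rightarrow> nat \<Rightarrow> nat list" where
  "itl pr k = (if k = 0 \<or> pr k \<ge> k then [k] else k # itl pr (pr k))"
  by auto
termination by (relation "measure snd") auto

declare itl.simps[simp del]

abbreviation "jv \<equiv> NL 7 (NC 0)"
abbreviation "hv \<equiv> NL 7 (NC 1)"
abbreviation "tv \<equiv> NL 7 (NC 2)"
abbreviation "bv \<equiv> NL 7 (NC 3)"
abbreviation "biv \<equiv> NL 7 (NC 4)"
abbreviation "kv \<equiv> NL 7 (NC 5)"
abbreviation "posv \<equiv> NL 7 (NC 6)"
abbreviation "nv \<equiv> NL 0 (NC 0)"
abbreviation "mv \<equiv> NL 2 (NC 0)"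

definition "loop1 = While (NLess jv (NAdd nv (NC 1)))
   (Seq (RAssign 7 jv (RAdd (RL 7 (NSub jv (NC 1))) (RL 1 jv)))
   (Seq (RAssign 6 (NAdd jv (NC 1)) (RAdd (RL 6 jv) (RL 4 jv)))
        (NAssign 7 (NC 0) (NAdd jv (NC 1)))))"

definition "phase1 = Seq (RAssign 6 (NC 0) (RC 0)) (Seq (RAssign 6 (NC 1) (RC 0))
   (Seq (RAssign 7 (NC 0) (RC 0)) (Seq (NAssign 7 (NC 0) (NC 1)) loop1)))"

locale inst =
  fixes n :: nat and Q \<alpha> :: real and q d0 dback dnext :: "nat \<Rightarrow> real"
  assumes n1: "n \<ge> 1" and Q0: "Q \<ge> 0" and a0: "\<alpha> \<ge> 0" and q0: "\<forall>i\<in>{1..n}. q i \<ge> 0"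
begin

abbreviation "c \<equiv> arc_cost Q \<alpha> q d0 dback dnext"
abbreviation "Dv \<equiv> Dpre dnext"
abbreviation "Qv \<equiv> Qpre q"

definition inpf :: "(nat \<times> nat \<Rightarrow> nat) \<Rightarrow> (nat \<times> nat \<Rightarrow> real) \<Rightarrow> bool" where
  "inpf N R \<longleftrightarrow> N (0,0) = n \<and> R (0,0) = Q \<and> R (0,1) = \<alpha> \<and>
     (\<forall>i. 1 \<le> i \<and> i \<le> n \<longrightarrow> R (1,i) = q i \<and> R (2,i) = d0 i \<and> R (3,i) = dback i) \<and>
     (\<forall>i. 1 \<le> i \<and> i < n \<longrightarrow> R (4,i) = dnext i)"

abbreviation "inp s \<equiv> inpf (nmem s) (rmem s)"

lemma inp_init: "inp (init_state n Q \<alpha> q d0 dback dnext)"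
  unfolding inpf_def init_state_def by auto

lemma inp_R[simp]: "a \<ge> 5 \<Longrightarrow> inpf N (R((a,i) := v)) = inpf N R"
  unfolding inpf_def by auto
lemma inp_N[simp]: "a \<ge> 1 \<Longrightarrow> inpf (N((a,i) := v)) R = inpf N R"
  unfolding inpf_def by auto

lemma inp_n: "inpf N R \<Longrightarrow> N (0,0) = n" unfolding inpf_def by auto
lemma inp_ns[simp]: "inpf (nmem s) R \<Longrightarrow> nmem s (0,0) = n" unfolding inpf_def by auto
lemma inp_Q: "inpf N R \<Longrightarrow> R (0,0) = Q" unfolding inpf_def by auto
lemma inp_a: "inpf N R \<Longrightarrow> R (0,1) = \<alpha>" unfolding inpf_def by auto
lemma inp_q: "inpf N R \<Longrightarrow> 1 \<le> i \<Longrightarrow> i \<le> n \<Longrightarrow> R (Suc 0,i) = q i" unfolding inpf_def by auto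
lemma inp_d0: "inpf N R \<Longrightarrow> 1 \<le> i \<Longrightarrow> i \<le> n \<Longrightarrow> R (2,i) = d0 i" unfolding inpf_def by auto
lemma inp_db: "inpf N R \<Longrightarrow> 1 \<le> i \<Longrightarrow> i \<le> n \<Longrightarrow> R (3,i) = dback i" unfolding inpf_def by auto
lemma inp_dn: "inpf N R \<Longrightarrow> 1 \<le> i \<Longrightarrow> i < n \<Longrightarrow> R (4,i) = dnext i" unfolding inpf_def by auto

lemma Qv_Suc: "Qv (Suc i) = Qv i + q (Suc i)"
  unfolding Qpre_def by simp
lemma Dv_Suc: "i \<ge> 1 \<Longrightarrow> Dv (Suc i) = Dv i + dnext i"
  unfolding Dpre_def by simp
lemma Dv_01: "Dv 0 = 0" "Dv 1 = 0" "Qv 0 = 0" unfolding Dpre_def Qpre_def by auto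

definition I1 :: "st \<Rightarrow> bool" where
  "I1 s \<longleftrightarrow> inp s \<and> 1 \<le> nmem s (7,0) \<and> nmem s (7,0) \<le> n+1 \<and>
     (\<forall>i < nmem s (7,0). rmem s (7,i) = Qv i) \<and>
     (\<forall>i. i \<le> nmem s (7,0) \<and> i \<le> n \<longrightarrow> rmem s (6,i) = Dv i)"

lemma loop1_spec:
  assumes "I1 s"
  shows "spec loop1 s (\<lambda>t s'. I1 s' \<and> nmem s' (7,0) = n+1 \<and> t + 4 * (n + 1 - nmem s' (7,0)) \<le> 4 * (n + 1 - nmem s (7,0)) + 1)"
  unfolding loop1_def
  apply (rule spec_mono[OF spec_While[where I=I1 and pot="\<lambda>s. 4 * (n + 1 - nmem s (7,0))"]])
    apply (rule assms)
  subgoal for s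
    apply (rule spec_Seq spec_RAssign spec_NAssign)+
    apply (simp add: I1_def inp_n)
    apply (elim conjE)
    apply (intro conjI)
    subgoal by simp
    subgoal by (cases "nmem s (7,0)") (auto simp: inp_q Qv_Suc)
    subgoal by (auto simp: inp_dn Dv_Suc)
    by simp
  apply (auto simp: I1_def inp_n)
  done


lemma path_cost_snoc: "xs \<noteq> [] \<Longrightarrow> path_cost f (xs @ [x]) = path_cost f xs + f (last xs) x"
  by (induction xs rule: induct_list012) (auto simp: path_cost_def)

lemma Qv_mono: "i \<le> k \<Longrightarrow> k \<le> n \<Longrightarrow> Qv i \<le> Qv k"
proof (induction k)
  case 0 then show ?case by simp
next
  case (Suc k)
  show ?case
  proof (cases "i = Suc k")
    case False
    then have "Qv i \<le> Qv k" using Suc by simp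
    moreover have "q (Suc k) \<ge> 0" using q0 Suc.prems by auto
    ultimately show ?thesis by (simp add: Qv_Suc)
  qed simp
qed

definition Pok :: "(nat \<Rightarrow> real) \<Rightarrow> (nat \<Rightarrow> nat) \<Rightarrow> nat \<Rightarrow> bool" where
  "Pok P pr j \<longleftrightarrow> P 0 = 0 \<and> (\<forall>i. 0 < i \<and> i < j \<longrightarrow> pr i < i \<and> P i = P (pr i) + c (pr i) i) \<and>
     (\<forall>i<j. \<forall>k<i. P i \<le> P k + c k i)"

lemma Pok_lower:
  assumes "Pok P pr (Suc n)"
  shows "p \<noteq> [] \<Longrightarrow> hd p = 0 \<Longrightarrow> sorted_wrt (<) p \<Longrightarrow> last p \<le> n \<Longrightarrow> P (last p) \<le> path_cost c p"
proof (induction p rule: rev_induct)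
  case Nil then show ?case by simp
next
  case (snoc x xs)
  show ?case
  proof (cases "xs = []")
    case True
    then show ?thesis using snoc.prems assms by (simp add: Pok_def path_cost_def)
  next
    case False
    have s: "sorted_wrt (<) xs" "\<forall>y\<in>set xs. y < x" using snoc.prems by (auto simp: sorted_wrt_append)
    have lx: "last xs < x" using s(2) False by simp
    have "last xs \<le> n" using lx snoc.prems(4) by simp
    then have "P (last xs) \<le> path_cost c xs" using snoc.IH False snoc.prems s lx by (simp add: hd_append)
    moreover have "P x \<le> P (last xs) + c (last xs) x" using assms lx snoc.prems unfolding Pok_def by auto
    ultimately show ?thesis using False by (simp add: path_cost_snoc)
  qed
qed

lemma itl_path:
  assumes "Pok P pr (Suc n)"
  shows "k \<le> n \<Longrightarrow> rev (itl pr k) \<noteq> [] \<and> hd (rev (itl pr k)) = 0 \<and> last (rev (itl pr k)) = k \<and>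
      sorted_wrt (<) (rev (itl pr k)) \<and> set (itl pr k) \<subseteq> {..k} \<and> path_cost c (rev (itl pr k)) = P k"
proof (induction k rule: less_induct)
  case (less k)
  show ?case
  proof (cases "k = 0")
    case True then show ?thesis using assms by (simp add: itl.simps Pok_def path_cost_def)
  next
    case False
    then have lt: "pr k < k" and Pk: "P k = P (pr k) + c (pr k) k" using assms less.prems unfolding Pok_def by auto
    have L: "itl pr k = k # itl pr (pr k)" using lt False by (subst itl.simps) auto
    have IH: "rev (itl pr (pr k)) \<noteq> [] \<and> hd (rev (itl pr (pr k))) = 0 \<and> last (rev (itl pr (pr k))) = pr k \<and>
      sorted_wrt (<) (rev (itl pr (pr k))) \<and> set (itl pr (pr k)) \<subseteq> {..pr k} \<and> path_cost c (rev (itl pr (pr k))) = P (pr k)"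
      using less.IH[OF lt] lt less.prems by simp
    show ?thesis unfolding L using IH lt Pk
      by (auto simp: path_cost_snoc sorted_wrt_append hd_append)
  qed
qed

end

definition dqinc :: "(nat \<Rightarrow> nat) \<Rightarrow> (nat \<Rightarrow> real) \<Rightarrow> nat \<Rightarrow> nat \<Rightarrow> nat \<Rightarrow> bool" where
  "dqinc dq F h T hi \<longleftrightarrow> (\<forall>k. h \<le> k \<and> k < T \<longrightarrow> dq k < hi) \<and>
     (\<forall>k k'. h \<le> k \<and> k < k' \<and> k' < T \<longrightarrow> dq k < dq k' \<and> F (dq k) < F (dq k'))"

definition dqlo :: "(nat \<Rightarrow> nat) \<Rightarrow> nat \<Rightarrow> nat \<Rightarrow> nat \<Rightarrow> bool" where
  "dqlo dq h T lo \<longleftrightarrow> (\<forall>k. h \<le> k \<and> k < T \<longrightarrow> lo \<le> dq k)"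

definition coverB :: "(nat \<Rightarrow> nat) \<Rightarrow> (nat \<Rightarrow> real) \<Rightarrow> nat \<Rightarrow> nat \<Rightarrow> nat \<Rightarrow> nat \<Rightarrow> nat \<Rightarrow> bool" where
  "coverB dq F h T lo hi x \<longleftrightarrow> (\<forall>i. lo \<le> i \<and> i < hi \<longrightarrow>
     (\<exists>k. h \<le> k \<and> k < T \<and> i \<le> dq k \<and> F (dq k) \<le> F i) \<or> F x \<le> F i)"

definition cover :: "(nat \<Rightarrow> nat) \<Rightarrow> (nat \<Rightarrow> real) \<Rightarrow> nat \<Rightarrow> nat \<Rightarrow> nat \<Rightarrow> nat \<Rightarrow> bool" where
  "cover dq F h T lo hi \<longleftrightarrow> (\<forall>i. lo \<le> i \<and> i < hi \<longrightarrow>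
     (\<exists>k. h \<le> k \<and> k < T \<and> i \<le> dq k \<and> F (dq k) \<le> F i))"

lemma cover_B: "cover dq F h T lo hi \<Longrightarrow> coverB dq F h T lo hi x"
  unfolding cover_def coverB_def by blast

lemma dqinc_le: "dqinc dq F h T hi \<Longrightarrow> Tp \<le> T \<Longrightarrow> dqinc dq F h Tp hi"
  unfolding dqinc_def by auto

lemma pop_back:
  assumes "dqinc dq F h T hi" "h < T" "F x \<le> F (dq (T - 1))" "coverB dq F h T lo hi x"
  shows "coverB dq F h (T - 1) lo hi x"
  unfolding coverB_def
proof (intro allI impI)
  fix i assume i: "lo \<le> i \<and> i < hi"
  from assms(4) i consider (a) k where "h \<le> k" "k < T" "i \<le> dq k" "F (dq k) \<le> F i" | (b) "F x \<le> F i"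
    unfolding coverB_def by blast
  then show "(\<exists>k. h \<le> k \<and> k < T - 1 \<and> i \<le> dq k \<and> F (dq k) \<le> F i) \<or> F x \<le> F i"
  proof cases
    case (a k)
    show ?thesis
    proof (cases "k = T - 1")
      case True then show ?thesis using a assms(3) by auto
    next
      case False then show ?thesis using a by (intro disjI1 exI[of _ k]) auto
    qed
  qed simp
qed

lemma push:
  assumes "dqinc dq F h T x" "h \<le> T" "h < T \<longrightarrow> F (dq (T - 1)) < F x" "coverB dq F h T lo x x"
    "dqlo dq h T lo" "lo \<le> x"
  shows "dqinc (dq(T := x)) F h (Suc T) (Suc x)" "cover (dq(T := x)) F h (Suc T) lo (Suc x)"
    "dqlo (dq(T := x)) h (Suc T) lo"
proof -
  show "dqinc (dq(T := x)) F h (Suc T) (Suc x)"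
    unfolding dqinc_def
  proof (rule conjI; intro allI impI)
    fix k assume "h \<le> k \<and> k < Suc T"
    then show "(dq(T := x)) k < Suc x" using assms(1) unfolding dqinc_def by (cases "k = T") auto
  next
    fix k k' assume kk: "h \<le> k \<and> k < k' \<and> k' < Suc T"
    show "(dq(T := x)) k < (dq(T := x)) k' \<and> F ((dq(T := x)) k) < F ((dq(T := x)) k')"
    proof (cases "k' = T")
      case True
      then have "k < T" "k \<noteq> T" using kk by auto
      moreover have "F (dq k) \<le> F (dq (T - 1))"
        using assms(1) kk \<open>k < T\<close> unfolding dqinc_def
        by (cases "k = T - 1") (auto intro: less_imp_le)
      ultimately show ?thesis using True assms kk unfolding dqinc_def by auto
    next
      case False
      then show ?thesis using assms(1) kk unfolding dqinc_def by auto
    qed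
  qed
  show "cover (dq(T := x)) F h (Suc T) lo (Suc x)"
    unfolding cover_def
  proof (intro allI impI)
    fix i assume i: "lo \<le> i \<and> i < Suc x"
    show "\<exists>k\<ge>h. k < Suc T \<and> i \<le> (dq(T := x)) k \<and> F ((dq(T := x)) k) \<le> F i"
    proof (cases "i = x")
      case True then show ?thesis using assms(2) by (intro exI[of _ T]) auto
    next
      case False
      then have "i < x" using i by auto
      with assms(4) i consider (a) k where "h \<le> k" "k < T" "i \<le> dq k" "F (dq k) \<le> F i" | (b) "F x \<le> F i"
        unfolding coverB_def by blast
      then show ?thesis
      proof cases
        case (a k) then show ?thesis by (intro exI[of _ k]) auto
      next
        case b then show ?thesis using \<open>i < x\<close> assms(2) by (intro exI[of _ T]) auto
      qed
    qed
  qed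
  show "dqlo (dq(T := x)) h (Suc T) lo" using assms(5,6) unfolding dqlo_def by auto
qed

lemma pop_front:
  assumes "dqinc dq F h T hi" "h < T" "dq h < lo" "cover dq F h T lo hi"
  shows "cover dq F (Suc h) T lo hi" "dqinc dq F (Suc h) T hi"
proof -
  show "cover dq F (Suc h) T lo hi"
    unfolding cover_def
  proof (intro allI impI)
    fix i assume i: "lo \<le> i \<and> i < hi"
    then obtain k where k: "h \<le> k" "k < T" "i \<le> dq k" "F (dq k) \<le> F i"
      using assms(4) unfolding cover_def by blast
    then have "k \<noteq> h" using assms(3) i by auto
    then show "\<exists>k\<ge>Suc h. k < T \<and> i \<le> dq k \<and> F (dq k) \<le> F i" using k by (intro exI[of _ k]) auto
  qed
  show "dqinc dq F (Suc h) T hi" using assms(1) unfolding dqinc_def by auto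
qed

lemma front_done:
  assumes "dqinc dq F h T hi" "\<not> (h < T \<and> dq h < lo)"
  shows "dqlo dq h T lo"
  unfolding dqlo_def
proof (intro allI impI)
  fix k assume k: "h \<le> k \<and> k < T"
  then have "dq h \<le> dq k" using assms(1) unfolding dqinc_def by (cases "k = h") (auto intro: less_imp_le)
  then show "lo \<le> dq k" using assms(2) k by auto
qed

lemma front_min:
  assumes "dqinc dq F h T hi" "cover dq F h T lo hi" "h < T" "lo \<le> i" "i < hi"
  shows "F (dq h) \<le> F i"
proof -
  obtain k where k: "h \<le> k" "k < T" "i \<le> dq k" "F (dq k) \<le> F i"
    using assms unfolding cover_def by blast
  have "F (dq h) \<le> F (dq k)" using assms(1) k unfolding dqinc_def by (cases "k = h") (auto intro: less_imp_le)
  then show ?thesis using k by simp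
qed

lemma empty_window:
  assumes "cover dq F h T lo hi" "\<not> h < T"
  shows "\<not> lo < hi"
  using assms unfolding cover_def by (meson le_refl order.strict_trans1 not_less)

definition arr :: "(nat \<times> nat \<Rightarrow> 'a) \<Rightarrow> nat \<Rightarrow> nat \<Rightarrow> 'a" where "arr M a i = M (a,i)"
lemma arr_apply: "arr M a i = M (a,i)" by (simp add: arr_def)
lemma arr_upd[simp]: "arr (M((a',i) := v)) a = (if a' = a then (arr M a)(i := v) else arr M a)"
  by (auto simp: arr_def fun_eq_iff)

abbreviation "dqf s \<equiv> arr (nmem s) 6"
abbreviation "Ff s \<equiv> arr (rmem s) 9"
abbreviation "jm1 \<equiv> NSub jv (NC 1)"

definition "backloop = While (BAnd (NLess hv tv) (RLe (RL 9 jm1) (RL 9 (NL 6 (NSub tv (NC 1))))))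
   (NAssign 7 (NC 2) (NSub tv (NC 1)))"

lemma back_spec:
  assumes "nmem s (7,0) = Suc x" "nmem s (7,1) = h" "nmem s (7,2) = T" "h \<le> T"
    "dqinc (dqf s) (Ff s) h T hi" "coverB (dqf s) (Ff s) h T lo hi x"
  shows "spec backloop s (\<lambda>t s'. \<exists>T'. s' = s\<lparr>nmem := (nmem s)((7,2) := T')\<rparr> \<and> h \<le> T' \<and> T' \<le> T \<and>
     dqinc (dqf s) (Ff s) h T' hi \<and> coverB (dqf s) (Ff s) h T' lo hi x \<and>
     (h < T' \<longrightarrow> Ff s (dqf s (T' - 1)) < Ff s x) \<and> t + 2 * T' \<le> 2 * T + 1)"
  unfolding backloop_def
  apply (rule spec_mono[OF spec_While[where I="\<lambda>s'. \<exists>T'. s' = s\<lparr>nmem := (nmem s)((7,2) := T')\<rparr> \<and> h \<le> T' \<and> T' \<le> T \<and>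
     dqinc (dqf s) (Ff s) h T' hi \<and> coverB (dqf s) (Ff s) h T' lo hi x" and pot="\<lambda>s'. 2 * nmem s' (7,2)"]])
  subgoal using assms by (intro exI[of _ T]) auto
  subgoal for s'
    apply (elim exE conjE)
    apply (rule spec_NAssign)
    subgoal for T'
      apply (rule conjI)
       apply (rule exI[of _ "T' - 1"])
       using assms by (auto intro: pop_back[unfolded One_nat_def] dqinc_le simp: arr_apply)
    done
  subgoal for t s'
    apply (elim exE conjE)
    subgoal for T'
      apply (rule exI[of _ T'])
      using assms by (auto simp: arr_apply)
    done
  done


definition "frontloop = While (BAnd (NLess hv tv) (NLess (NL 6 hv) bv)) (NAssign 7 (NC 1) (NAdd hv (NC 1)))"

lemma front_spec:
  assumes "nmem s (7,1) = h" "nmem s (7,2) = T" "nmem s (7,3) = lo" "h \<le> T"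
    "dqinc (dqf s) (Ff s) h T hi" "cover (dqf s) (Ff s) h T lo hi"
  shows "spec frontloop s (\<lambda>t s'. \<exists>H'. s' = s\<lparr>nmem := (nmem s)((7,1) := H')\<rparr> \<and> h \<le> H' \<and> H' \<le> T \<and>
     dqinc (dqf s) (Ff s) H' T hi \<and> cover (dqf s) (Ff s) H' T lo hi \<and> dqlo (dqf s) H' T lo \<and>
     t + 2 * (T - H') \<le> 2 * (T - h) + 1)"
  unfolding frontloop_def
  apply (rule spec_mono[OF spec_While[where I="\<lambda>s'. \<exists>H'. s' = s\<lparr>nmem := (nmem s)((7,1) := H')\<rparr> \<and> h \<le> H' \<and> H' \<le> T \<and>
     dqinc (dqf s) (Ff s) H' T hi \<and> cover (dqf s) (Ff s) H' T lo hi" and pot="\<lambda>s'. 2 * (T - nmem s' (7,1))"]])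
  subgoal using assms by (intro exI[of _ h]) auto
  subgoal for s'
    apply (elim exE conjE)
    apply (rule spec_NAssign)
    subgoal for H'
      apply (rule conjI)
       apply (rule exI[of _ "Suc H'"])
       using assms pop_front[of "dqf s" "Ff s" H' "nmem s (7,2)" hi "nmem s (7,3)"] by (auto simp: arr_apply)
    done
  subgoal for t s'
    apply (elim exE conjE)
    subgoal for H'
      apply (rule exI[of _ H'])
      apply (subgoal_tac "dqlo (dqf s) H' (nmem s (7,2)) (nmem s (7,3))")
       using assms apply (auto)[1]
      apply (rule front_done[of _ "Ff s" _ _ hi])
      using assms by (auto simp: arr_apply)
    done
  done

definition prefok :: "(nat \<Rightarrow> real) \<Rightarrow> nat \<Rightarrow> nat \<Rightarrow> real \<Rightarrow> bool" where
  "prefok H b bi bh \<longleftrightarrow> (0 < b \<longrightarrow> bi < b \<and> bh = H bi \<and> (\<forall>i<b. bh \<le> H i))"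

lemma prefok_T: "prefok H b bi bh \<Longrightarrow> b = 0 \<or> H b < bh \<Longrightarrow> prefok H (Suc b) b (H b)"
  unfolding prefok_def by (auto simp: less_Suc_eq intro: less_imp_le order.trans)
lemma prefok_F: "prefok H b bi bh \<Longrightarrow> \<not> (b = 0 \<or> H b < bh) \<Longrightarrow> prefok H (Suc b) bi bh"
  unfolding prefok_def by (auto simp: less_Suc_eq)

definition "advloop = While (RLess (RL 7 bv) (RSub (RL 7 jv) (RL 0 (NC 0))))
  (Seq (If (BOr (NEq bv (NC 0)) (RLess (RL 10 bv) (RL 11 (NC 0))))
           (Seq (RAssign 11 (NC 0) (RL 10 bv)) (NAssign 7 (NC 4) bv)) Skip)
       (NAssign 7 (NC 3) (NAdd bv (NC 1))))"

context inst begin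

lemma adv_spec:
  assumes "nmem s (7,0) = j" "j \<le> n" "rmem s (0,0) = Q" "\<forall>i\<le>n. rmem s (7,i) = Qv i"
    "nmem s (7,3) = b0" "b0 \<le> j" "\<forall>i<b0. Qv i < Qv j - Q"
    "prefok (arr (rmem s) 10) b0 (nmem s (7,4)) (rmem s (11,0))"
  shows "spec advloop s (\<lambda>t s'. \<exists>b' bi' bh'. nmem s' = (nmem s)((7,3) := b', (7,4) := bi') \<and>
     rmem s' = (rmem s)((11,0) := bh') \<and> b0 \<le> b' \<and> b' \<le> j \<and> (\<forall>i<b'. Qv i < Qv j - Q) \<and>
     Qv j - Q \<le> Qv b' \<and> prefok (arr (rmem s) 10) b' bi' bh' \<and> t + 5 * (n + 1 - b') \<le> 5 * (n + 1 - b0) + 1)"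
  unfolding advloop_def
  apply (rule spec_mono[OF spec_While[where I="\<lambda>s'. \<exists>b' bi' bh'. nmem s' = (nmem s)((7,3) := b', (7,4) := bi') \<and>
     rmem s' = (rmem s)((11,0) := bh') \<and> b0 \<le> b' \<and> b' \<le> j \<and> (\<forall>i<b'. Qv i < Qv j - Q) \<and>
     prefok (arr (rmem s) 10) b' bi' bh'" and pot="\<lambda>s'. 5 * (n + 1 - nmem s' (7,3))"]])
  subgoal using assms by (intro exI[of _ b0] exI[of _ "nmem s (7,4)"] exI[of _ "rmem s (11,0)"]) auto
  subgoal for s'
    apply (elim exE conjE)
    subgoal premises p for b' bi' bh'
    proof -
      have nm: "nmem s' = (nmem s)((7,3) := b', (7,4) := bi')" and rm: "rmem s' = (rmem s)((11,0) := bh')"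
        and b0: "b0 \<le> b'" and bj: "b' \<le> j" and qb: "\<forall>i<b'. Qv i < Qv j - Q"
        and pk: "prefok (arr (rmem s) 10) b' bi' bh'" using p by auto
      have cond: "Qv b' < Qv j - Q" using p(1) nm rm assms(1-4) bj by simp
      have blt: "b' < j" using cond Q0 bj by (cases "b' = j") auto
      have qb': "\<forall>i<Suc b'. Qv i < Qv j - Q" using qb cond by (auto simp: less_Suc_eq)
      have tw: "(nmem s)((7, 4) := x, (7, 3) := y) = (nmem s)((7, 3) := y, (7, 4) := x)" for x y
        by (rule fun_upd_twist) simp
      show ?thesis
        apply (rule spec_Seq, rule spec_If)
        subgoal premises c
        proof -
          have c': "b' = 0 \<or> rmem s (10,b') < bh'" using c nm rm by (simp add: arr_apply)
          have pk': "prefok (arr (rmem s) 10) (Suc b') b' (rmem s (10,b'))"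
            using prefok_T[OF pk] c' by (simp add: arr_apply)
          show ?thesis
            apply (rule spec_Seq spec_RAssign spec_NAssign)+
            apply (rule conjI)
             apply (rule exI[of _ "Suc b'"], rule exI[of _ b'], rule exI[of _ "rmem s (10,b')"])
             apply (simp add: nm rm b0 blt qb' tw pk' le_SucI Suc_leI)
            using blt assms(2) nm by simp
        qed
        subgoal premises c
        proof -
          have c': "\<not> (b' = 0 \<or> rmem s (10,b') < bh')" using c nm rm by (simp add: arr_apply)
          have pk': "prefok (arr (rmem s) 10) (Suc b') bi' bh'"
            using prefok_F[OF pk] c' by (simp add: arr_apply)
          show ?thesis
            apply (rule spec_Skip spec_NAssign)+
            apply (rule conjI)
             apply (rule exI[of _ "Suc b'"], rule exI[of _ bi'], rule exI[of _ bh'])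
             apply (simp add: nm rm b0 blt qb' tw pk' le_SucI Suc_leI)
            using blt assms(2) nm by simp
        qed
        done
    qed
    done
  subgoal for t s'
    apply (elim exE conjE)
    subgoal for b' bi' bh'
      apply (rule exI[of _ b'], rule exI[of _ bi'], rule exI[of _ bh'])
      using assms by auto
    done
  done

end

lemma spec_Seq_gen: "spec c1 s R1 \<Longrightarrow> (\<And>t s'. R1 t s' \<Longrightarrow> spec c2 s' (\<lambda>t2 s2. R (t + t2) s2)) \<Longrightarrow> spec (Seq c1 c2) s R"
  by (rule spec_Seq, erule spec_mono) auto

lemma dqinc_cong: "dqinc dq F h T hi \<Longrightarrow> (\<forall>i<hi. F' i = F i) \<Longrightarrow> dqinc dq F' h T hi"
  unfolding dqinc_def by auto
lemma cover_cong: "dqinc dq F h T hi \<Longrightarrow> cover dq F h T lo hi \<Longrightarrow> (\<forall>i<hi. F' i = F i) \<Longrightarrow> cover dq F' h T lo hi"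
  unfolding dqinc_def cover_def by (metis order.strict_trans1)
lemma cover_mono: "cover dq F h T lo hi \<Longrightarrow> lo \<le> lo' \<Longrightarrow> cover dq F h T lo' hi"
  unfolding cover_def by auto
lemma dqlo_le: "dqlo dq h T lo \<Longrightarrow> T' \<le> T \<Longrightarrow> dqlo dq h T' lo"
  unfolding dqlo_def by auto
lemma prefok_cong: "prefok H b bi bh \<Longrightarrow> (\<forall>i<b. H' i = H i) \<Longrightarrow> prefok H' b bi bh"
  unfolding prefok_def by auto

abbreviation "Pf s \<equiv> arr (rmem s) 8"
abbreviation "prf s \<equiv> arr (nmem s) 5"
abbreviation "Hf s \<equiv> arr (rmem s) 10"

definition "stepFH = Seq (RAssign 9 jm1 (RSub (RAdd (RL 8 jm1) (RL 2 jv)) (RL 6 jv)))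
   (RAssign 10 jm1 (RSub (RL 9 jm1) (RMul (RL 0 (NC 1)) (RL 7 jm1))))"
definition "pushc = Seq (NAssign 6 tv jm1) (NAssign 7 (NC 2) (NAdd tv (NC 1)))"
abbreviation "prefval \<equiv> RAdd (RL 11 (NC 0)) (RMul (RL 0 (NC 1)) (RSub (RL 7 jv) (RL 0 (NC 0))))"
abbreviation "basev \<equiv> RAdd (RL 6 jv) (RL 3 jv)"
definition "setPref = Seq (RAssign 8 jv (RAdd basev prefval)) (NAssign 5 jv biv)"
definition "setFront = Seq (RAssign 8 jv (RAdd basev (RL 9 (NL 6 hv)))) (NAssign 5 jv (NL 6 hv))"
definition "choosec = If (NLess hv tv) (If (BAnd (NLess (NC 0) bv) (RLess prefval (RL 9 (NL 6 hv)))) setPref setFront) setPref"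
definition "body2 = Seq stepFH (Seq backloop (Seq pushc (Seq advloop (Seq frontloop (Seq choosec (NAssign 7 (NC 0) (NAdd jv (NC 1))))))))"
definition "mainloop = While (NLess jv (NAdd nv (NC 1))) body2"

context inst begin
declare arr_apply[simp]

lemma inp_as[simp]: "inpf N (rmem s) \<Longrightarrow> rmem s (0, Suc 0) = \<alpha>" unfolding inpf_def by auto
lemma inp_Qs[simp]: "inpf N (rmem s) \<Longrightarrow> rmem s (0, 0) = Q" unfolding inpf_def by auto

definition FHok :: "st \<Rightarrow> nat \<Rightarrow> bool" where
  "FHok s m \<longleftrightarrow> (\<forall>i<m. rmem s (9,i) = rmem s (8,i) + d0 (i+1) - Dv (i+1) \<and> rmem s (10,i) = rmem s (9,i) - \<alpha> * Qv i)"

lemma pok_ext: "Pok P pr j \<Longrightarrow> 0 < j \<Longrightarrow> p < j \<Longrightarrow> v = P p + c p j \<Longrightarrow> (\<forall>k<j. v \<le> P k + c k j)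
   \<Longrightarrow> Pok (P(j:=v)) (pr(j:=p)) (Suc j)"
  unfolding Pok_def by (auto simp: less_Suc_eq)

lemma choose_spec:
  fixes s :: st
  defines "j \<equiv> nmem s (7,0)" and "h \<equiv> nmem s (7,1)" and "T \<equiv> nmem s (7,2)" and "b \<equiv> nmem s (7,3)"
    and "bi \<equiv> nmem s (7,4)"
  assumes inp: "inp s" and Qs: "\<forall>i\<le>n. rmem s (7,i) = Qv i" and Ds: "\<forall>i\<le>n. rmem s (6,i) = Dv i"
    and j: "1 \<le> j" "j \<le> n" and P: "Pok (Pf s) (prf s) j" and FH: "FHok s j"
    and dq: "dqinc (dqf s) (Ff s) h T j" "cover (dqf s) (Ff s) h T b j" "dqlo (dqf s) h T b"
    and b: "b \<le> j" "\<forall>i<b. Qv i < Qv j - Q" "Qv j - Q \<le> Qv b"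
    and pf: "prefok (Hf s) b bi (rmem s (11,0))"
  shows "spec choosec s (\<lambda>t s'. t \<le> 4 \<and> (\<exists>p v. nmem s' = (nmem s)((5,j):=p) \<and> rmem s' = (rmem s)((8,j):=v) \<and>
     Pok ((Pf s)(j:=v)) ((prf s)(j:=p)) (Suc j)))"
proof -
  define base where "base = Dv j + dback j"
  define bh where "bh = rmem s (11,0)"
  define M where "M i = \<alpha> * max (Qv j - Qv i - Q) 0" for i
  have M0: "M i \<ge> 0" for i using a0 unfolding M_def by simp
  have key: "Pf s i + c i j = base + Ff s i + M i" if "i < j" for i
    using FH that unfolding FHok_def base_def M_def arc_cost_def by auto
  have base_eq: "rmem s (6,j) + rmem s (3,j) = base"
    using Ds inp j unfolding base_def by (simp add: inp_db)
  have pv_eq: "rmem s (11,0) + rmem s (0, Suc 0) * (rmem s (7,j) - rmem s (0,0)) = bh + \<alpha> * (Qv j - Q)"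
    using inp Qs j unfolding bh_def by simp
  have Mhi: "M i = 0" if "b \<le> i" "i < j" for i
  proof -
    have "Qv b \<le> Qv i" using Qv_mono that j by auto
    then show ?thesis using b(3) unfolding M_def by simp
  qed
  have pref: "Pf s bi + c bi j = base + (bh + \<alpha> * (Qv j - Q))" "\<forall>i<b. bh + \<alpha> * (Qv j - Q) \<le> Ff s i + M i"
    "bi < j" if "0 < b"
  proof -
    have bi: "bi < b" "bh = Hf s bi" "\<forall>i<b. bh \<le> Hf s i" using pf that unfolding prefok_def bh_def by auto
    have Mlo: "M i = \<alpha> * (Qv j - Qv i - Q)" if "i < b" for i using b(2) that unfolding M_def by auto
    have Hi: "Hf s i = Ff s i - \<alpha> * Qv i" if "i < j" for i using FH that unfolding FHok_def by auto
    show "Pf s bi + c bi j = base + (bh + \<alpha> * (Qv j - Q))"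
      using key[of bi] bi Mlo[of bi] Hi[of bi] b(1) by (simp add: algebra_simps)
    show "\<forall>i<b. bh + \<alpha> * (Qv j - Q) \<le> Ff s i + M i"
    proof (intro allI impI)
      fix i assume "i < b"
      then show "bh + \<alpha> * (Qv j - Q) \<le> Ff s i + M i" using bi Mlo[of i] Hi[of i] b(1)
        by (auto simp: algebra_simps)
    qed
    show "bi < j" using bi b(1) by simp
  qed
  have front: "b \<le> dqf s h" "dqf s h < j" "Pf s (dqf s h) + c (dqf s h) j = base + Ff s (dqf s h)"
    "\<forall>i. b \<le> i \<and> i < j \<longrightarrow> Ff s (dqf s h) \<le> Ff s i + M i" if "h < T"
  proof -
    show b1: "b \<le> dqf s h" using dq(3) that unfolding dqlo_def by auto
    show b2: "dqf s h < j" using dq(1) that unfolding dqinc_def by auto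
    show "Pf s (dqf s h) + c (dqf s h) j = base + Ff s (dqf s h)" using key[OF b2] Mhi[OF b1 b2] by simp
    show "\<forall>i. b \<le> i \<and> i < j \<longrightarrow> Ff s (dqf s h) \<le> Ff s i + M i"
      using front_min[OF dq(1) dq(2) that] M0 by (smt (verit))
  qed
  have lower: "\<forall>k<j. v \<le> Pf s k + c k j"
    if "0 < b \<Longrightarrow> v \<le> base + (bh + \<alpha> * (Qv j - Q))" "h < T \<Longrightarrow> v \<le> base + Ff s (dqf s h)" for v
  proof (intro allI impI)
    fix k assume k: "k < j"
    show "v \<le> Pf s k + c k j"
    proof (cases "k < b")
      case True
      then have b0: "0 < b" by simp
      have "bh + \<alpha> * (Qv j - Q) \<le> Ff s k + M k" using pref(2)[OF b0] True by auto
      then show ?thesis using that(1)[OF b0] key[OF k] by linarith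
    next
      case False
      then have "h < T" using empty_window[OF dq(2)] k by auto
      then have "Ff s (dqf s h) \<le> Ff s k + M k" using front(4) False k by auto
      then show ?thesis using that(2)[OF \<open>h < T\<close>] key[OF k] by linarith
    qed
  qed
  have j0: "0 < j" using j by simp
  have pref_case: "spec setPref s (\<lambda>t s'. t \<le> 2 \<and> (\<exists>p v. nmem s' = (nmem s)((5,j):=p) \<and> rmem s' = (rmem s)((8,j):=v) \<and>
     Pok ((Pf s)(j:=v)) ((prf s)(j:=p)) (Suc j)))" if b0: "0 < b" and hb: "h < T \<Longrightarrow> bh + \<alpha> * (Qv j - Q) \<le> Ff s (dqf s h)"
    unfolding setPref_def
    apply (rule spec_Seq spec_RAssign spec_NAssign)+
    apply (simp add: j_def[symmetric] bi_def[symmetric])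
    apply (rule exI[of _ bi], rule conjI[OF refl], rule exI, rule conjI[OF refl])
    apply (simp only: base_eq pv_eq)
    apply (rule pok_ext[OF P j0 pref(3)[OF b0]])
     using pref(1)[OF b0] apply simp
    apply (rule lower)
    using hb by auto
  have front_case: "spec setFront s (\<lambda>t s'. t \<le> 2 \<and> (\<exists>p v. nmem s' = (nmem s)((5,j):=p) \<and> rmem s' = (rmem s)((8,j):=v) \<and>
     Pok ((Pf s)(j:=v)) ((prf s)(j:=p)) (Suc j)))" if hT: "h < T" and le: "0 < b \<Longrightarrow> Ff s (dqf s h) \<le> bh + \<alpha> * (Qv j - Q)"
    unfolding setFront_def
    apply (rule spec_Seq spec_RAssign spec_NAssign)+
    apply (simp add: j_def[symmetric] h_def[symmetric])
    apply (rule exI, rule conjI[OF refl], rule exI, rule conjI[OF refl])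
    apply (simp only: base_eq flip: One_nat_def h_def)
    apply (rule pok_ext[OF P j0 front(2)[OF hT, simplified]])
     using front(3)[OF hT] apply simp
    apply (rule lower)
    using le by auto
  show ?thesis
    unfolding choosec_def
    apply (rule spec_If)
     apply (rule spec_If)
    subgoal premises prems
      apply (rule spec_mono[OF pref_case])
      using prems pv_eq unfolding b_def h_def bh_def j_def T_def by auto
    subgoal premises prems
      apply (rule spec_mono[OF front_case])
      using prems pv_eq unfolding b_def h_def bh_def j_def T_def by auto
    subgoal premises prems
      apply (rule spec_mono[OF pref_case])
      using prems empty_window[OF dq(2)] j b(1) unfolding b_def h_def bh_def j_def T_def by auto
    done
qed

end

context inst begin
declare arr_apply[simp]

definition I2 :: "st \<Rightarrow> bool" where
  "I2 s \<longleftrightarrow> inp s \<and> (\<forall>i\<le>n. rmem s (7,i) = Qv i) \<and> (\<forall>i\<le>n. rmem s (6,i) = Dv i) \<and>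
   1 \<le> nmem s (7,0) \<and> nmem s (7,0) \<le> n+1 \<and> Pok (Pf s) (prf s) (nmem s (7,0)) \<and> FHok s (nmem s (7,0) - 1) \<and>
   nmem s (7,1) \<le> nmem s (7,2) \<and> dqinc (dqf s) (Ff s) (nmem s (7,1)) (nmem s (7,2)) (nmem s (7,0) - 1) \<and>
   dqlo (dqf s) (nmem s (7,1)) (nmem s (7,2)) (nmem s (7,3)) \<and>
   cover (dqf s) (Ff s) (nmem s (7,1)) (nmem s (7,2)) (nmem s (7,3)) (nmem s (7,0) - 1) \<and>
   nmem s (7,3) \<le> nmem s (7,0) - 1 \<and> (\<forall>i < nmem s (7,3). Qv i < Qv (nmem s (7,0) - 1) - Q) \<and>
   prefok (Hf s) (nmem s (7,3)) (nmem s (7,4)) (rmem s (11,0))"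

definition pot2 :: "st \<Rightarrow> nat" where
  "pot2 s = 20 * (n + 1 - nmem s (7,0)) + 4 * (nmem s (7,2) - nmem s (7,1)) + 5 * (n + 1 - nmem s (7,3))"

lemma body_spec:
  assumes I: "I2 s" and lt: "nmem s (7,0) < n+1"
  shows "spec body2 s (\<lambda>t s'. I2 s' \<and> t + pot2 s' < pot2 s)"
proof -
  define j where "j = nmem s (7,0)"
  define h where "h = nmem s (7,1)"
  define T where "T = nmem s (7,2)"
  define b where "b = nmem s (7,3)"
  define bi where "bi = nmem s (7,4)"
  have inp: "inp s" and Qs: "\<forall>i\<le>n. rmem s (7,i) = Qv i" and Ds: "\<forall>i\<le>n. rmem s (6,i) = Dv i"
    and j1: "1 \<le> j" and P: "Pok (Pf s) (prf s) j" and FH: "FHok s (j - 1)" and hT: "h \<le> T"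
    and dqi: "dqinc (dqf s) (Ff s) h T (j - 1)" and dql: "dqlo (dqf s) h T b"
    and cv: "cover (dqf s) (Ff s) h T b (j - 1)" and bj: "b \<le> j - 1"
    and bq: "\<forall>i<b. Qv i < Qv (j - 1) - Q" and pf: "prefok (Hf s) b bi (rmem s (11,0))"
    using I unfolding I2_def j_def h_def T_def b_def bi_def by auto
  have jn: "j \<le> n" using lt j_def by simp
  obtain x where jx: "j = Suc x" using j1 by (cases j) auto
  have xj: "j - 1 = x" using jx by simp
  define F1 where "F1 = rmem s (8,x) + d0 j - Dv j"
  define H1 where "H1 = F1 - \<alpha> * Qv x"
  define s1 where "s1 = s\<lparr>rmem := (rmem s)((9,x) := F1, (10,x) := H1)\<rparr>"
  have st1: "spec stepFH s (\<lambda>t s'. t = 2 \<and> s' = s1)"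
    unfolding stepFH_def
    apply (rule spec_Seq spec_RAssign)+
    using inp Qs Ds jn jx unfolding s1_def F1_def H1_def j_def
    by (simp add: inp_d0)
  have n1: "nmem s1 = nmem s" and r1: "rmem s1 = (rmem s)((9,x) := F1, (10,x) := H1)" unfolding s1_def by auto
  have Fs1: "Ff s1 = (Ff s)(x := F1)" using r1 by simp
  have dq1: "dqf s1 = dqf s" using n1 by simp
  have agree: "\<forall>i<x. ((Ff s)(x := F1)) i = Ff s i" by simp
  have bk: "spec backloop s1 (\<lambda>t s'. \<exists>T'. s' = s1\<lparr>nmem := (nmem s1)((7,2) := T')\<rparr> \<and> h \<le> T' \<and> T' \<le> T \<and>
     dqinc (dqf s1) (Ff s1) h T' x \<and> coverB (dqf s1) (Ff s1) h T' b x x \<and>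
     (h < T' \<longrightarrow> Ff s1 (dqf s1 (T' - 1)) < Ff s1 x) \<and> t + 2 * T' \<le> 2 * T + 1)"
    apply (rule back_spec)
    subgoal using n1 jx j_def by simp
    subgoal using n1 h_def by simp
    subgoal using n1 T_def by simp
    subgoal using hT .
    subgoal unfolding Fs1 dq1 by (rule dqinc_cong[OF dqi[unfolded xj] agree])
    subgoal unfolding Fs1 dq1 by (rule cover_B, rule cover_cong[OF dqi[unfolded xj] cv[unfolded xj] agree])
    done
  show ?thesis
    unfolding body2_def
    apply (rule spec_Seq_gen[OF st1])
    subgoal premises p1 for t1 s1'
    proof -
      have e1: "t1 = 2" "s1' = s1" using p1 by auto
      show ?thesis unfolding e1
        apply (rule spec_Seq_gen[OF bk])
        subgoal premises p2 for t2 s2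
        proof -
          obtain T' where s2: "s2 = s1\<lparr>nmem := (nmem s1)((7,2) := T')\<rparr>" and hT': "h \<le> T'" "T' \<le> T"
            and dqi2: "dqinc (dqf s1) (Ff s1) h T' x" and cvB: "coverB (dqf s1) (Ff s1) h T' b x x"
            and bkf: "h < T' \<longrightarrow> Ff s1 (dqf s1 (T' - 1)) < Ff s1 x" and t2: "t2 + 2 * T' \<le> 2 * T + 1"
            using p2 by blast
          define s3 where "s3 = s2\<lparr>nmem := (nmem s2)((6,T') := x, (7,2) := Suc T')\<rparr>"
          have st3: "spec pushc s2 (\<lambda>t s'. t = 2 \<and> s' = s3)"
            unfolding pushc_def
            apply (rule spec_Seq spec_NAssign)+
            using n1 jx j_def unfolding s3_def s2 by simp
          have n3: "nmem s3 = (nmem s)((7,2) := T', (6,T') := x, (7,2) := Suc T')" and r3: "rmem s3 = rmem s1"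
            unfolding s3_def s2 n1 by auto
          have dq3: "dqf s3 = (dqf s)(T' := x)" using n3 by simp
          have F3: "Ff s3 = (Ff s)(x := F1)" using r3 Fs1 by simp
          have pushed: "dqinc ((dqf s)(T' := x)) ((Ff s)(x := F1)) h (Suc T') (Suc x)"
              "cover ((dqf s)(T' := x)) ((Ff s)(x := F1)) h (Suc T') b (Suc x)"
              "dqlo ((dqf s)(T' := x)) h (Suc T') b"
            using push[OF dqi2[unfolded dq1 Fs1] hT'(1) bkf[unfolded dq1 Fs1] cvB[unfolded dq1 Fs1]
                dqlo_le[OF dql hT'(2)]] bj xj by auto
          have inp3: "inp s3" using inp n3 r3 r1 by simp
          have Qs3: "\<forall>i\<le>n. rmem s3 (7,i) = Qv i" using Qs r3 r1 by simp
          have Ds3: "\<forall>i\<le>n. rmem s3 (6,i) = Dv i" using Ds r3 r1 by simp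
          have H3: "Hf s3 = (Hf s)(x := H1)" using r3 r1 by simp
          have Qxj: "Qv x \<le> Qv j" using Qv_mono jx jn by simp
          have ad: "spec advloop s3 (\<lambda>t s'. \<exists>b' bi' bh'. nmem s' = (nmem s3)((7,3) := b', (7,4) := bi') \<and>
             rmem s' = (rmem s3)((11,0) := bh') \<and> b \<le> b' \<and> b' \<le> j \<and> (\<forall>i<b'. Qv i < Qv j - Q) \<and>
             Qv j - Q \<le> Qv b' \<and> prefok (arr (rmem s3) 10) b' bi' bh' \<and> t + 5 * (n + 1 - b') \<le> 5 * (n + 1 - b) + 1)"
            apply (rule adv_spec)
            subgoal using n3 j_def by simp
            subgoal using jn .
            subgoal using inp3 by simp
            subgoal using Qs3 .
            subgoal using n3 b_def by simp
            subgoal using bj by simp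
            subgoal using bq xj Qxj by force
            subgoal unfolding H3 using n3 r3 r1 bi_def prefok_cong[OF pf, of "(Hf s)(x := H1)"] bj xj by simp
            done
          show ?thesis
            apply (rule spec_Seq_gen[OF st3])
            subgoal premises p3 for t3 s3'
            proof -
              have e3: "t3 = 2" "s3' = s3" using p3 by auto
              show ?thesis unfolding e3
                apply (rule spec_Seq_gen[OF ad])
                subgoal premises p4 for t4 s4
                proof -
                  obtain b' bi' bh' where n4: "nmem s4 = (nmem s3)((7,3) := b', (7,4) := bi')"
                    and r4: "rmem s4 = (rmem s3)((11,0) := bh')" and bb: "b \<le> b'" "b' \<le> j"
                    and bq4: "\<forall>i<b'. Qv i < Qv j - Q" and bq4': "Qv j - Q \<le> Qv b'"
                    and pf4: "prefok (arr (rmem s3) 10) b' bi' bh'" and t4: "t4 + 5 * (n + 1 - b') \<le> 5 * (n + 1 - b) + 1"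
                    using p4 by blast
                  have dq4: "dqf s4 = (dqf s)(T' := x)" using n4 n3 by simp
                  have F4: "Ff s4 = (Ff s)(x := F1)" using r4 r3 Fs1 by simp
                  have fr: "spec frontloop s4 (\<lambda>t s'. \<exists>H'. s' = s4\<lparr>nmem := (nmem s4)((7,1) := H')\<rparr> \<and> h \<le> H' \<and> H' \<le> Suc T' \<and>
                     dqinc (dqf s4) (Ff s4) H' (Suc T') j \<and> cover (dqf s4) (Ff s4) H' (Suc T') b' j \<and> dqlo (dqf s4) H' (Suc T') b' \<and>
                     t + 2 * (Suc T' - H') \<le> 2 * (Suc T' - h) + 1)"
                    apply (rule front_spec)
                    subgoal using n4 n3 h_def by simp
                    subgoal using n4 n3 by simp
                    subgoal using n4 n3 by simp
                    subgoal using hT' by simp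
                    subgoal unfolding dq4 F4 using pushed(1) jx by simp
                    subgoal unfolding dq4 F4 using cover_mono[OF pushed(2) bb(1)] jx by simp
                    done
                  show ?thesis
                    apply (rule spec_Seq_gen[OF fr])
                    subgoal premises p5 for t5 s5
                    proof -
                      obtain H' where s5: "s5 = s4\<lparr>nmem := (nmem s4)((7,1) := H')\<rparr>" and hH: "h \<le> H'" "H' \<le> Suc T'"
                        and dqi5: "dqinc (dqf s4) (Ff s4) H' (Suc T') j" and cv5: "cover (dqf s4) (Ff s4) H' (Suc T') b' j"
                        and dql5: "dqlo (dqf s4) H' (Suc T') b'" and t5: "t5 + 2 * (Suc T' - H') \<le> 2 * (Suc T' - h) + 1"
                        using p5 by blast
                      have n5: "nmem s5 = (nmem s4)((7,1) := H')" and r5: "rmem s5 = rmem s4" using s5 by auto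
                      have FH5: "FHok s5 j" unfolding FHok_def
                      proof (intro allI impI)
                        fix i assume i: "i < j"
                        show "rmem s5 (9, i) = rmem s5 (8, i) + d0 (i + 1) - Dv (i + 1) \<and> rmem s5 (10, i) = rmem s5 (9, i) - \<alpha> * Qv i"
                        proof (cases "i = x")
                          case True
                          then show ?thesis using r5 r4 r3 r1 jx unfolding F1_def H1_def by simp
                        next
                          case False
                          then have "i < x" using i jx by simp
                          then show ?thesis using FH r5 r4 r3 r1 xj False unfolding FHok_def by simp
                        qed
                      qed
                      have ch: "spec choosec s5 (\<lambda>t s'. t \<le> 4 \<and> (\<exists>p v. nmem s' = (nmem s5)((5,j):=p) \<and> rmem s' = (rmem s5)((8,j):=v) \<and>
                         Pok ((Pf s5)(j:=v)) ((prf s5)(j:=p)) (Suc j)))"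
                      proof -
                        have j5: "nmem s5 (7,0) = j" using n5 n4 n3 j_def by simp
                        have h5: "nmem s5 (7,1) = H'" using n5 by simp
                        have T5: "nmem s5 (7,2) = Suc T'" using n5 n4 n3 by simp
                        have b5: "nmem s5 (7,3) = b'" using n5 n4 by simp
                        have bi5: "nmem s5 (7,4) = bi'" using n5 n4 by simp
                        have dq5: "dqf s5 = (dqf s)(T' := x)" using n5 dq4 by simp
                        have F5: "Ff s5 = (Ff s)(x := F1)" using r5 F4 by simp
                        have Pf5: "Pf s5 = Pf s" using r5 r4 r3 r1 by simp
                        have pr5: "prf s5 = prf s" using n5 n4 n3 by simp
                        have H5: "Hf s5 = arr (rmem s3) 10" using r5 r4 by simp
                        have bh5: "rmem s5 (11,0) = bh'" using r5 r4 by simp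
                        show ?thesis
                          apply (rule choose_spec[of s5, unfolded j5 h5 T5 b5 bi5])
                          subgoal using inp3 n5 n4 r5 r4 by simp
                          subgoal using Qs3 r5 r4 by simp
                          subgoal using Ds3 r5 r4 by simp
                          subgoal using j1 .
                          subgoal using jn .
                          subgoal unfolding Pf5 pr5 using P .
                          subgoal using FH5 .
                          subgoal unfolding dq5 F5 using dqi5 unfolding dq4 F4 .
                          subgoal unfolding dq5 F5 using cv5 unfolding dq4 F4 .
                          subgoal unfolding dq5 using dql5 unfolding dq4 .
                          subgoal using bb(2) .
                          subgoal using bq4 .
                          subgoal using bq4' .
                          subgoal unfolding H5 bh5 using pf4 .
                          done
                      qed
                      show ?thesis
                        apply (rule spec_Seq_gen[OF ch])
                        subgoal premises p6 for t6 s6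
                        proof -
                          obtain p v where n6: "nmem s6 = (nmem s5)((5,j):=p)" and r6: "rmem s6 = (rmem s5)((8,j):=v)"
                            and Pk: "Pok ((Pf s5)(j:=v)) ((prf s5)(j:=p)) (Suc j)" and t6: "t6 \<le> 4"
                            using p6 by blast
                          define s7 where "s7 = s6\<lparr>nmem := (nmem s6)((7,0) := Suc j)\<rparr>"
                          have n7: "nmem s7 = (nmem s6)((7,0) := Suc j)" and r7: "rmem s7 = rmem s6" unfolding s7_def by auto
                          have e7: "nmem s7 (7,0) = Suc j" "nmem s7 (7,1) = H'" "nmem s7 (7,2) = Suc T'"
                            "nmem s7 (7,3) = b'" "nmem s7 (7,4) = bi'"
                            using n7 n6 n5 n4 n3 by simp_all
                          have dq7: "dqf s7 = (dqf s)(T' := x)" using n7 n6 n5 dq4 by simp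
                          have F7: "Ff s7 = (Ff s)(x := F1)" using r7 r6 r5 F4 by simp
                          have Pf7: "Pf s7 = (Pf s5)(j := v)" using r7 r6 by simp
                          have pr7: "prf s7 = (prf s5)(j := p)" using n7 n6 by simp
                          have H7: "Hf s7 = arr (rmem s3) 10" using r7 r6 r5 r4 by simp
                          have bh7: "rmem s7 (11,0) = bh'" using r7 r6 r5 r4 by simp
                          have inp7: "inp s7" using inp3 n7 n6 n5 n4 r7 r6 r5 r4 by simp
                          have Qs7: "\<forall>i\<le>n. rmem s7 (7,i) = Qv i" using Qs3 r7 r6 r5 r4 by simp
                          have Ds7: "\<forall>i\<le>n. rmem s7 (6,i) = Dv i" using Ds3 r7 r6 r5 r4 by simp
                          have FH7: "FHok s7 j"
                          proof -
                            show ?thesis using FH5 using r7 r6 unfolding FHok_def by simp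
                          qed
                          have I7: "I2 s7"
                            unfolding I2_def e7 dq7 F7 Pf7 pr7 H7 bh7
                            using inp7 Qs7 Ds7 jn Pk FH7 hH dqi5 cv5 dql5 bb bq4 pf4
                            unfolding dq4 F4 by simp
                          have j6: "nmem s6 (7,0) = j" using n6 n5 n4 n3 j_def by simp
                          have s7eq: "s6\<lparr>nmem := (nmem s6)((7, neval (NC 0) s6) := neval (NAdd jv (NC 1)) s6)\<rparr> = s7"
                            unfolding s7_def using j6 by simp
                          have pot7: "pot2 s7 = 20 * (n + 1 - Suc j) + 4 * (Suc T' - H') + 5 * (n + 1 - b')"
                            unfolding pot2_def using e7 by simp
                          have pot0: "pot2 s = 20 * (n + 1 - j) + 4 * (T - h) + 5 * (n + 1 - b)"
                            unfolding pot2_def j_def T_def h_def b_def by simp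
                          have tt: "2 + (t2 + (2 + (t4 + (t5 + (t6 + 1))))) + pot2 s7 < pot2 s"
                            unfolding pot7 pot0 using t2 t4 t5 t6 hT' hH bb jn by linarith
                          show ?thesis
                            apply (rule spec_NAssign)
                            unfolding s7eq using I7 tt by simp
                        qed
                        done
                    qed
                    done
                qed
                done
            qed
            done
        qed
        done
    qed
    done
qed

end

definition "init2 = Seq (RAssign 8 (NC 0) (RC 0)) (Seq (NAssign 7 (NC 1) (NC 0)) (Seq (NAssign 7 (NC 2) (NC 0))
   (Seq (NAssign 7 (NC 3) (NC 0)) (NAssign 7 (NC 0) (NC 1)))))"
definition "loopA = While (NLess (NC 0) kv) (Seq (NAssign 7 (NC 5) (NL 5 kv)) (NAssign 2 (NC 0) (NAdd mv (NC 1))))"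
definition "loopB = While (NLess (NC 0) posv) (Seq (NAssign 7 (NC 5) (NL 5 kv)) (Seq (NAssign 7 (NC 6) (NSub posv (NC 1)))
   (NAssign 3 posv kv)))"
definition "init4 = Seq (NAssign 7 (NC 5) nv) (NAssign 2 (NC 0) (NC 0))"
definition "mid4 = Seq (NAssign 7 (NC 5) nv) (Seq (NAssign 7 (NC 6) mv) (NAssign 3 posv kv))"
definition "recon = Seq init4 (Seq loopA (Seq mid4 loopB))"
definition "prog = Seq phase1 (Seq init2 (Seq mainloop (Seq (RAssign 5 (NC 0) (RL 8 nv)) recon)))"

lemma itl_hd: "itl pr k \<noteq> [] \<and> hd (itl pr k) = k"
  using itl.simps[of pr k] by auto

lemma itl_len: "length (itl pr k) \<le> k + 1"
proof (induction k rule: less_induct)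
  case (less k)
  show ?case
  proof (cases "k = 0 \<or> pr k \<ge> k")
    case True then show ?thesis by (subst itl.simps) auto
  next
    case False
    then have "length (itl pr (pr k)) \<le> pr k + 1" using less by auto
    then show ?thesis using False by (subst itl.simps) auto
  qed
qed

lemma itl_two: "length (itl pr k) \<ge> 2 \<Longrightarrow> k \<noteq> 0 \<and> pr k < k \<and> itl pr k = k # itl pr (pr k)"
  using itl.simps[of pr k] by (auto split: if_splits)

context inst begin

lemma main_spec:
  assumes "I2 s"
  shows "spec mainloop s (\<lambda>t s'. I2 s' \<and> nmem s' (7,0) = n + 1 \<and> t + pot2 s' \<le> pot2 s + 1)"
  unfolding mainloop_def
  apply (rule spec_mono[OF spec_While[where I=I2 and pot=pot2]])
    apply (rule assms)
   apply (rule spec_mono[OF body_spec]) apply assumption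
  subgoal unfolding I2_def by auto
   apply simp
  unfolding I2_def by auto


definition IA :: "(nat \<Rightarrow> nat) \<Rightarrow> nat list \<Rightarrow> (nat \<times> nat \<Rightarrow> real) \<Rightarrow> st \<Rightarrow> bool" where
  "IA pr L R0 s \<longleftrightarrow> arr (nmem s) 5 = pr \<and> nmem s (0,0) = n \<and> rmem s = R0 \<and> nmem s (7,5) \<le> n \<and>
     itl pr (nmem s (7,5)) = drop (nmem s (2,0)) L"

lemma loopA_spec:
  assumes pr_lt: "\<forall>i. 0 < i \<and> i \<le> n \<longrightarrow> pr i < i" and I: "IA pr L R0 s"
  shows "spec loopA s (\<lambda>t s'. IA pr L R0 s' \<and> nmem s' (7,5) = 0 \<and> t + 3 * nmem s' (7,5) \<le> 3 * nmem s (7,5) + 1)"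
  unfolding loopA_def
  apply (rule spec_mono[OF spec_While[where I="IA pr L R0" and pot="\<lambda>s. 3 * nmem s (7,5)"]])
    apply (rule I)
  subgoal for s'
    apply (rule spec_Seq spec_NAssign)+
    subgoal premises p
    proof -
      define k where "k = nmem s' (7,5)"
      have k0: "0 < k" using p(2) k_def by simp
      have ia: "arr (nmem s') 5 = pr" "nmem s' (0,0) = n" "rmem s' = R0" "k \<le> n"
        "itl pr k = drop (nmem s' (2,0)) L" using p(1) unfolding IA_def k_def by auto
      have prk: "pr k < k" using pr_lt k0 ia(4) by auto
      have pk: "nmem s' (5,k) = pr k" using ia(1) by (metis arr_apply)
      have it: "itl pr k = k # itl pr (pr k)" using itl.simps[of pr k] k0 prk by auto
      have dr: "itl pr (pr k) = drop (Suc (nmem s' (2,0))) L"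
        using ia(5) it by (metis drop_Suc list.sel(3) tl_drop)
      show ?thesis
        unfolding IA_def using ia pk dr prk k0 by (simp add: k_def[symmetric])
    qed
    done
  subgoal for t s' by simp
  done

definition IB :: "(nat \<Rightarrow> nat) \<Rightarrow> nat list \<Rightarrow> (nat \<times> nat \<Rightarrow> real) \<Rightarrow> nat \<Rightarrow> st \<Rightarrow> bool" where
  "IB pr L R0 m s \<longleftrightarrow> arr (nmem s) 5 = pr \<and> nmem s (0,0) = n \<and> rmem s = R0 \<and> nmem s (2,0) = m \<and>
     length L = Suc m \<and> nmem s (7,6) \<le> m \<and> itl pr (nmem s (7,5)) = drop (m - nmem s (7,6)) L \<and>
     (\<forall>i. nmem s (7,6) \<le> i \<and> i \<le> m \<longrightarrow> nmem s (3,i) = rev L ! i)"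

lemma loopB_spec:
  assumes I: "IB pr L R0 m s"
  shows "spec loopB s (\<lambda>t s'. IB pr L R0 m s' \<and> nmem s' (7,6) = 0 \<and> t + 4 * nmem s' (7,6) \<le> 4 * nmem s (7,6) + 1)"
  unfolding loopB_def
  apply (rule spec_mono[OF spec_While[where I="IB pr L R0 m" and pot="\<lambda>s. 4 * nmem s (7,6)"]])
    apply (rule I)
  subgoal for s'
    apply (rule spec_Seq spec_NAssign)+
    subgoal premises p
    proof -
      define k where "k = nmem s' (7,5)"
      define pos where "pos = nmem s' (7,6)"
      have p0: "0 < pos" using p(2) pos_def by simp
      have ib: "arr (nmem s') 5 = pr" "nmem s' (0,0) = n" "rmem s' = R0" "nmem s' (2,0) = m"
        "length L = Suc m" "pos \<le> m" "itl pr k = drop (m - pos) L"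
        "\<forall>i. pos \<le> i \<and> i \<le> m \<longrightarrow> nmem s' (3,i) = rev L ! i"
        using p(1) unfolding IB_def k_def pos_def by auto
      have "length (itl pr k) = Suc pos" using ib(5,6,7) by simp
      then have two: "k \<noteq> 0 \<and> pr k < k \<and> itl pr k = k # itl pr (pr k)" using itl_two[of pr k] p0 by simp
      have pk: "nmem s' (5,k) = pr k" using ib(1) by (metis arr_apply)
      have dr: "itl pr (pr k) = drop (m - (pos - 1)) L"
      proof -
        have "m - (pos - 1) = Suc (m - pos)" using p0 ib(6) by simp
        then show ?thesis using ib(7) two by (metis drop_Suc list.sel(3) tl_drop)
      qed
      have nth: "rev L ! (pos - 1) = pr k"
      proof -
        have "rev L ! (pos - 1) = L ! (m - (pos - 1))" using ib(5) p0 ib(6) by (simp add: rev_nth)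
        also have "\<dots> = hd (drop (m - (pos - 1)) L)" using ib(5) by (simp add: hd_drop_conv_nth)
        also have "\<dots> = pr k" using dr itl_hd[of pr "pr k"] by simp
        finally show ?thesis .
      qed
      have old: "\<forall>i. pos - 1 \<le> i \<and> i \<le> m \<longrightarrow> ((nmem s')((7,5) := pr k, (7,6) := pos - 1, (3, pos - 1) := pr k)) (3,i) = rev L ! i"
      proof (intro allI impI)
        fix i assume i: "pos - 1 \<le> i \<and> i \<le> m"
        show "((nmem s')((7,5) := pr k, (7,6) := pos - 1, (3, pos - 1) := pr k)) (3,i) = rev L ! i"
        proof (cases "i = pos - 1")
          case True then show ?thesis using nth by simp
        next
          case False
          then have "pos \<le> i" using i p0 by arith
          then show ?thesis using ib(8) i False by simp
        qed
      qed
      show ?thesis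
        unfolding IB_def using ib pk dr nth p0 old
        apply (simp add: k_def[symmetric] pos_def[symmetric])
        using p0 ib(6) by arith
    qed
    done
  subgoal for t s' by simp
  done

lemma recon_spec:
  assumes inp: "inp s" and P: "Pok (Pf s) (prf s) (Suc n)"
  shows "spec recon s (\<lambda>t s'. out_path s' = rev (itl (prf s) n) \<and> rmem s' = rmem s \<and> t \<le> 7 * n + 10)"
proof -
  define pr where "pr = prf s"
  define L where "L = itl pr n"
  have pr_lt: "\<forall>i. 0 < i \<and> i \<le> n \<longrightarrow> pr i < i" using P unfolding Pok_def pr_def by auto
  define s2 where "s2 = s\<lparr>nmem := (nmem s)((7,5) := n, (2,0) := 0)\<rparr>"
  have st2: "spec init4 s (\<lambda>t s'. t = 2 \<and> s' = s2)"
    unfolding init4_def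
    apply (rule spec_Seq spec_NAssign)+
    using inp unfolding s2_def by simp
  have IA2: "IA pr L (rmem s) s2" unfolding IA_def s2_def L_def pr_def using inp by simp
  have lA: "spec loopA s2 (\<lambda>t s'. IA pr L (rmem s) s' \<and> nmem s' (7,5) = 0 \<and> t + 3 * nmem s' (7,5) \<le> 3 * nmem s2 (7,5) + 1)"
    by (rule loopA_spec[OF pr_lt IA2])
  have k2: "nmem s2 (7,5) = n" unfolding s2_def by simp
  show ?thesis
    unfolding recon_def
    apply (rule spec_Seq_gen[OF st2])
    subgoal premises p1 for t1 s1'
    proof -
      have e1: "t1 = 2" "s1' = s2" using p1 by auto
      show ?thesis unfolding e1
        apply (rule spec_Seq_gen[OF lA])
        subgoal premises p2 for t2 sA
        proof -
          have ia: "arr (nmem sA) 5 = pr" "nmem sA (0,0) = n" "rmem sA = rmem s"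
            "itl pr 0 = drop (nmem sA (2,0)) L" and kA: "nmem sA (7,5) = 0" and t2: "t2 \<le> 3 * n + 1"
            using p2 k2 unfolding IA_def by auto
          define m where "m = nmem sA (2,0)"
          have "drop m L = [0]" using ia(4) itl.simps[of pr 0] m_def by simp
          then have "length (drop m L) = 1" by simp
          then have "length L - m = 1" by simp
          then have lenL: "length L = Suc m" by arith
          have mn: "m \<le> n" using itl_len[of pr n] lenL L_def by simp
          define sB where "sB = sA\<lparr>nmem := (nmem sA)((7,5) := n, (7,6) := m, (3,m) := n)\<rparr>"
          have stB: "spec mid4 sA (\<lambda>t s'. t = 3 \<and> s' = sB)"
            unfolding mid4_def
            apply (rule spec_Seq spec_NAssign)+
            using ia(2) unfolding sB_def m_def by simp
          have hdL: "rev L ! m = n"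
          proof -
            have "rev L ! m = L ! 0" using lenL by (simp add: rev_nth)
            also have "\<dots> = n" using itl_hd[of pr n] L_def by (metis hd_conv_nth)
            finally show ?thesis .
          qed
          have IBB: "IB pr L (rmem s) m sB"
            unfolding IB_def
          proof (intro conjI)
            show "arr (nmem sB) 5 = pr" unfolding sB_def using ia(1) by simp
            show "nmem sB (0,0) = n" unfolding sB_def using ia(2) by simp
            show "rmem sB = rmem s" unfolding sB_def using ia(3) by simp
            show "nmem sB (2,0) = m" unfolding sB_def m_def by simp
            show "length L = Suc m" by (rule lenL)
            show "nmem sB (7,6) \<le> m" unfolding sB_def by simp
            show "itl pr (nmem sB (7,5)) = drop (m - nmem sB (7,6)) L" unfolding sB_def L_def by simp
            show "\<forall>i. nmem sB (7,6) \<le> i \<and> i \<le> m \<longrightarrow> nmem sB (3,i) = rev L ! i"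
              unfolding sB_def using hdL by auto
          qed
          have lB: "spec loopB sB (\<lambda>t s'. IB pr L (rmem s) m s' \<and> nmem s' (7,6) = 0 \<and> t + 4 * nmem s' (7,6) \<le> 4 * nmem sB (7,6) + 1)"
            by (rule loopB_spec[OF IBB])
          have posB: "nmem sB (7,6) = m" unfolding sB_def by simp
          show ?thesis
            apply (rule spec_Seq_gen[OF stB])
            subgoal premises p3 for t3 s3'
            proof -
              have e3: "t3 = 3" "s3' = sB" using p3 by auto
              show ?thesis unfolding e3
                apply (rule spec_mono[OF lB])
                subgoal premises p4 for t4 sF
                proof -
                  have ib: "nmem sF (2,0) = m" "rmem sF = rmem s" "\<forall>i. i \<le> m \<longrightarrow> nmem sF (3,i) = rev L ! i"
                    and t4: "t4 \<le> 4 * m + 1" using p4 posB unfolding IB_def by auto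
                  have op: "out_path sF = rev L"
                    unfolding out_path_def ib(1)
                  proof (rule nth_equalityI)
                    show "length (map (\<lambda>k. nmem sF (3, k)) [0..<m + 1]) = length (rev L)" using lenL by simp
                  next
                    fix i assume "i < length (map (\<lambda>k. nmem sF (3, k)) [0..<m + 1])"
                    then have "i \<le> m" by simp
                    then show "map (\<lambda>k. nmem sF (3, k)) [0..<m + 1] ! i = rev L ! i"
                      using ib(3) by (simp del: upt_Suc)
                  qed
                  show ?thesis using op ib(2) t2 t4 mn unfolding L_def pr_def by simp
                qed
                done
            qed
            done
        qed
        done
    qed
    done
qed
end

context inst begin

lemma phase1_spec:
  assumes "inp s"
  shows "spec phase1 s (\<lambda>t s'. inp s' \<and> (\<forall>i\<le>n. rmem s' (7,i) = Qv i) \<and> (\<forall>i\<le>n. rmem s' (6,i) = Dv i) \<and> t \<le> 4 * n + 5)"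
  unfolding phase1_def
  apply (rule spec_Seq spec_RAssign spec_NAssign)+
  apply (rule spec_mono[OF loop1_spec])
  subgoal unfolding I1_def using assms n1 by (auto simp: Dv_01 Dv_01[unfolded One_nat_def] le_Suc_eq)
  subgoal for t s' unfolding I1_def by auto
  done

lemma init2_spec:
  assumes "inp s" "\<forall>i\<le>n. rmem s (7,i) = Qv i" "\<forall>i\<le>n. rmem s (6,i) = Dv i"
  shows "spec init2 s (\<lambda>t s'. I2 s' \<and> t = 5 \<and> pot2 s' = 25 * n + 5)"
  unfolding init2_def
  apply (rule spec_Seq spec_RAssign spec_NAssign)+
  using assms unfolding I2_def pot2_def Pok_def FHok_def dqinc_def dqlo_def cover_def prefok_def
  by auto

lemma prog_spec:
  "spec prog (init_state n Q \<alpha> q d0 dback dnext) (\<lambda>t s'. t \<le> 100 * n \<and> is_path n (out_path s') \<and>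
     out_cost s' = path_cost c (out_path s') \<and> (\<forall>p. is_path n p \<longrightarrow> path_cost c (out_path s') \<le> path_cost c p))"
  unfolding prog_def
  apply (rule spec_Seq_gen[OF phase1_spec[OF inp_init]])
  subgoal premises p1 for t1 s1
  proof -
    have f1: "inp s1" "\<forall>i\<le>n. rmem s1 (7,i) = Qv i" "\<forall>i\<le>n. rmem s1 (6,i) = Dv i" and t1: "t1 \<le> 4 * n + 5"
      using p1 by auto
    show ?thesis
      apply (rule spec_Seq_gen[OF init2_spec[OF f1]])
      subgoal premises p2 for t2 s2
      proof -
        have I2: "I2 s2" and t2: "t2 = 5" and pt: "pot2 s2 = 25 * n + 5" using p2 by auto
        show ?thesis
          apply (rule spec_Seq_gen[OF main_spec[OF I2]])
          subgoal premises p3 for t3 s3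
          proof -
            have I3: "I2 s3" and j3: "nmem s3 (7,0) = n + 1" and t3: "t3 \<le> 25 * n + 6" using p3 pt by auto
            have inp3: "inp s3" and P3: "Pok (Pf s3) (prf s3) (Suc n)" using I3 j3 unfolding I2_def by auto
            define s4 where "s4 = s3\<lparr>rmem := (rmem s3)((5,0) := rmem s3 (8,n))\<rparr>"
            have inp4: "inp s4" using inp3 unfolding s4_def by simp
            have P4: "Pok (Pf s4) (prf s4) (Suc n)" using P3 unfolding s4_def by simp
            have st4: "spec (RAssign 5 (NC 0) (RL 8 nv)) s3 (\<lambda>t s'. t = 1 \<and> s' = s4)"
              apply (rule spec_RAssign) using inp3 unfolding s4_def by simp
            show ?thesis
              apply (rule spec_Seq_gen[OF st4])
              subgoal premises p4 for t4 s4'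
              proof -
                have e4: "t4 = 1" "s4' = s4" using p4 by auto
                show ?thesis unfolding e4
                  apply (rule spec_mono[OF recon_spec[OF inp4 P4]])
                  subgoal premises p5 for t5 sF
                  proof -
                    have op: "out_path sF = rev (itl (prf s4) n)" and r: "rmem sF = rmem s4" and t5: "t5 \<le> 7 * n + 10"
                      using p5 by auto
                    have ip: "rev (itl (prf s4) n) \<noteq> [] \<and> hd (rev (itl (prf s4) n)) = 0 \<and> last (rev (itl (prf s4) n)) = n \<and>
                      sorted_wrt (<) (rev (itl (prf s4) n)) \<and> path_cost c (rev (itl (prf s4) n)) = Pf s4 n"
                      using itl_path[OF P4, of n] by simp
                    have oc: "out_cost sF = Pf s4 n" unfolding out_cost_def r s4_def by simp
                    have opt: "\<forall>p. is_path n p \<longrightarrow> Pf s4 n \<le> path_cost c p"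
                      using Pok_lower[OF P4] unfolding is_path_def by fastforce
                    show ?thesis
                      unfolding op oc using ip opt t1 t2 t3 t5 n1 unfolding is_path_def by auto
                  qed
                  done
              qed
              done
          qed
          done
      qed
      done
  qed
  done

end

theorem mainTheorem4:
  shows "\<exists>(P :: com) (C :: nat).
    \<forall>(n :: nat) (Q :: real) (\<alpha> :: real) (q :: nat \<Rightarrow> real)
      (d0 :: nat \<Rightarrow> real) (dback :: nat \<Rightarrow> real) (dnext :: nat \<Rightarrow> real).
      n \<ge> 1 \<longrightarrow> Q \<ge> 0 \<longrightarrow> \<alpha> \<ge> 0 \<longrightarrow> (\<forall>i \<in> {1..n}. q i \<ge> 0) \<longrightarrow>
      (\<exists>t s'. exec P (init_state n Q \<alpha> q d0 dback dnext) t s' \<and> t \<le> C * n \<and>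
         is_path n (out_path s') \<and>
         out_cost s' = path_cost (arc_cost Q \<alpha> q d0 dback dnext) (out_path s') \<and>
         (\<forall>p. is_path n p \<longrightarrow>
            path_cost (arc_cost Q \<alpha> q d0 dback dnext) (out_path s')
              \<le> path_cost (arc_cost Q \<alpha> q d0 dback dnext) p))"
proof -
  have "\<forall>(n :: nat) (Q :: real) (\<alpha> :: real) (q :: nat \<Rightarrow> real)
      (d0 :: nat \<Rightarrow> real) (dback :: nat \<Rightarrow> real) (dnext :: nat \<Rightarrow> real).
      n \<ge> 1 \<longrightarrow> Q \<ge> 0 \<longrightarrow> \<alpha> \<ge> 0 \<longrightarrow> (\<forall>i \<in> {1..n}. q i \<ge> 0) \<longrightarrow>
      (\<exists>t s'. exec prog (init_state n Q \<alpha> q d0 dback dnext) t s' \<and> t \<le> 100 * n \<and>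
         is_path n (out_path s') \<and>
         out_cost s' = path_cost (arc_cost Q \<alpha> q d0 dback dnext) (out_path s') \<and>
         (\<forall>p. is_path n p \<longrightarrow>
            path_cost (arc_cost Q \<alpha> q d0 dback dnext) (out_path s')
              \<le> path_cost (arc_cost Q \<alpha> q d0 dback dnext) p))"
  proof (intro allI impI)
    fix n :: nat and Q \<alpha> :: real and q d0 dback dnext :: "nat \<Rightarrow> real"
    assume "n \<ge> 1" "Q \<ge> 0" "\<alpha> \<ge> 0" "\<forall>i \<in> {1..n}. q i \<ge> 0"
    then interpret inst n Q \<alpha> q d0 dback dnext by unfold_locales
    show "\<exists>t s'. exec prog (init_state n Q \<alpha> q d0 dback dnext) t s' \<and> t \<le> 100 * n \<and>
         is_path n (out_path s') \<and>
         out_cost s' = path_cost (arc_cost Q \<alpha> q d0 dback dnext) (out_path s') \<and>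
         (\<forall>p. is_path n p \<longrightarrow>
            path_cost (arc_cost Q \<alpha> q d0 dback dnext) (out_path s')
              \<le> path_cost (arc_cost Q \<alpha> q d0 dback dnext) p)"
      using prog_spec unfolding spec_def by blast
  qed
  then show ?thesis by blast
qed


end
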